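(* Let $X=\{1,\dots,n\}$, $Y$ finite, $Q$ a symmetric irreducible stochastic matrix on $Y$ (notation in context). Let $2\le k\le n$, let $\underline a$ be a type with $a_0+\cdots+a_m=k$, $A\subseteq X$ with $|A|=k$, and $F\in P_{k,\underline a,A}$. Then $$D^*_{k,\underline a}D_{k,\underline a}F=|Y|\,(k-\ell(\underline a))\,F+Q_kF.$$
   Context: $Q$ acts on $L(Y)$ by $(Qf)(y)=\sum_{y'}q(y,y')f(y')$, with distinct eigenvalues $\lambda_0=1,\dots,\lambda_m$ and eigenspaces $W_0$ (constants), $W_1,\dots,W_m$; $\sum_yf(y)=0$ for $f\in W_j$, $j\ge1$. $\Theta_k$: functions $\theta$ with $\mathrm{dom}(\theta)$ a $k$-subset of $X$ and values in $Y$; $\varphi\subseteq\theta$ means $\mathrm{dom}\varphi\subseteq\mathrm{dom}\theta$ and $\theta|_{\mathrm{dom}\varphi}=\varphi$. $D_k:L(\Theta_k)\to L(\Theta_{k-1})$, $(D_kF)(\varphi)=\sum_{\theta\supseteq\varphi}F(\theta)$; $D_k^*:L(\Theta_{k-1})\to L(\Theta_k)$, $(D_k^*F)(\theta)=\sum_{\varphi\subseteq\theta}F(\varphi)$. Types $\underline a=(a_0,\dots,a_m)$, $\ell(\underline a)=a_1+\cdots+a_m$, $\underline a'=(a_0-1,a_1,\dots,a_m)$. A fundamental function of type $\underline a$ on a $k$-set $A$ is $F=\bigotimes_{j\in A}F^j$ ($F(\theta)=\prod_{j\in A}F^j(\theta(j))$ on $Y^A$, $0$ elsewhere) with each $F^j$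 in some $W_{i_j}$ and exactly $a_i$ indices $j$ with $i_j=i$; $P_{k,\underline a,A}$ is their span and $P_{k,\underline a}=\bigoplus_AP_{k,\underline a,A}$ ($=\{0\}$ if a type entry is negative). $D_{k,\underline a}$ is the restriction of $D_k$ to $P_{k,\underline a}$ (with values in $P_{k-1,\underline a'}$) and $D^*_{k,\underline a}$ the restriction of $D^*_k$ to $P_{k-1,\underline a'}$. The operator $Q_k$ on $L(\Theta_k)$ is defined on a fundamental function $F=\bigotimes_{j\in A}F^j$ and extended linearly: for $\theta\in\Theta_k$ with $|\mathrm{dom}\theta\cap A|=k-1$, $A\setminus\mathrm{dom}\theta=\{i\}$, $\mathrm{dom}\theta\setminus A=\{i_0\}$, set $(Q_kF)(\theta)=|Y|F(\bar\theta)$ if $F^i\in W_0$ and $(Q_kF)(\theta)=0$ if $F^i\notin W_0$, where $\bar\theta\in Y^A$ agrees with $\theta$ on $A\setminus\{i\}$ and $\bar\theta(i)=\theta(i_0)$; for all other $\theta$, $(Q_kF)(\theta)=0$. *)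

theory Defs
  imports Complex_Main
begin

(* Y is the finite type 'y; X = {1..n} \<subseteq> nat.
   L(Theta_k) is represented by real-valued functions on all partial maps
   (only values on Theta_k matter). *)

definition Qop :: "('y::finite \<Rightarrow> 'y \<Rightarrow> real) \<Rightarrow> ('y \<Rightarrow> real) \<Rightarrow> 'y \<Rightarrow> real" where
  "Qop q f y = (\<Sum>y'\<in>UNIV. q y y' * f y')"

definition sym_irred_stochastic :: "('y::finite \<Rightarrow> 'y \<Rightarrow> real) \<Rightarrow> bool" where
  "sym_irred_stochastic q \<longleftrightarrow>
     (\<forall>y y'. q y y' = q y' y) \<and>
     (\<forall>y y'. 0 \<le> q y y') \<and>
     (\<forall>y. (\<Sum>y'\<in>UNIV. q y y') = 1) \<and>
     (\<forall>y y'. (y, y') \<in> {(u, v). q u v > 0}\<^sup>*)"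

definition eigen_enum :: "('y::finite \<Rightarrow> 'y \<Rightarrow> real) \<Rightarrow> (nat \<Rightarrow> real) \<Rightarrow> nat \<Rightarrow> bool" where
  "eigen_enum q lam m \<longleftrightarrow> lam 0 = 1 \<and> inj_on lam {..m} \<and>
     (\<forall>\<mu>. (\<exists>f. (\<exists>y. f y \<noteq> 0) \<and> Qop q f = (\<lambda>y. \<mu> * f y)) \<longleftrightarrow> \<mu> \<in> lam ` {..m})"

definition W :: "('y::finite \<Rightarrow> 'y \<Rightarrow> real) \<Rightarrow> (nat \<Rightarrow> real) \<Rightarrow> nat \<Rightarrow> ('y \<Rightarrow> real) set" where
  "W q lam i = {f. Qop q f = (\<lambda>y. lam i * f y)}"

definition Theta :: "nat \<Rightarrow> nat \<Rightarrow> (nat \<rightharpoonup> 'y) set" where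
  "Theta n k = {\<theta>. dom \<theta> \<subseteq> {1..n} \<and> card (dom \<theta>) = k}"

definition D :: "nat \<Rightarrow> nat \<Rightarrow> ((nat \<rightharpoonup> 'y) \<Rightarrow> real) \<Rightarrow> (nat \<rightharpoonup> 'y) \<Rightarrow> real" where
  "D n k F \<phi> = (\<Sum>\<theta>\<in>{\<theta>\<in>Theta n k. \<phi> \<subseteq>\<^sub>m \<theta>}. F \<theta>)"

definition Dstar :: "nat \<Rightarrow> nat \<Rightarrow> ((nat \<rightharpoonup> 'y) \<Rightarrow> real) \<Rightarrow> (nat \<rightharpoonup> 'y) \<Rightarrow> real" where
  "Dstar n k G \<theta> = (\<Sum>\<phi>\<in>{\<phi>\<in>Theta n (k - 1). \<phi> \<subseteq>\<^sub>m \<theta>}. G \<phi>)"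

definition tensor :: "nat set \<Rightarrow> (nat \<Rightarrow> 'y \<Rightarrow> real) \<Rightarrow> (nat \<rightharpoonup> 'y) \<Rightarrow> real" where
  "tensor A Fs \<theta> = (if dom \<theta> = A then (\<Prod>j\<in>A. Fs j (the (\<theta> j))) else 0)"

definition fund_data :: "('y::finite \<Rightarrow> 'y \<Rightarrow> real) \<Rightarrow> (nat \<Rightarrow> real) \<Rightarrow> nat \<Rightarrow> (nat \<Rightarrow> nat)
    \<Rightarrow> nat set \<Rightarrow> (nat \<Rightarrow> 'y \<Rightarrow> real) \<Rightarrow> (nat \<Rightarrow> nat) \<Rightarrow> bool" where
  "fund_data q lam m a A Fs idx \<longleftrightarrow>
     (\<forall>j\<in>A. idx j \<le> m \<and> Fs j \<in> W q lam (idx j)) \<and>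
     (\<forall>i\<le>m. card {j\<in>A. idx j = i} = a i)"

definition P :: "('y::finite \<Rightarrow> 'y \<Rightarrow> real) \<Rightarrow> (nat \<Rightarrow> real) \<Rightarrow> nat \<Rightarrow> (nat \<Rightarrow> nat)
    \<Rightarrow> nat set \<Rightarrow> ((nat \<rightharpoonup> 'y) \<Rightarrow> real) set" where
  "P q lam m a A = {F. \<exists>N (cs :: nat \<Rightarrow> real) Fss idxs.
      (\<forall>t<N. fund_data q lam m a A (Fss t) (idxs t)) \<and>
      F = (\<lambda>\<theta>. \<Sum>t<N. cs t * tensor A (Fss t) \<theta>)}"

definition ell :: "nat \<Rightarrow> (nat \<Rightarrow> nat) \<Rightarrow> nat" where
  "ell m a = (\<Sum>i\<in>{1..m}. a i)"

definition Qk_fund :: "('y::finite \<Rightarrow> 'y \<Rightarrow> real) \<Rightarrow> (nat \<Rightarrow> real) \<Rightarrow> nat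
    \<Rightarrow> nat set \<Rightarrow> (nat \<Rightarrow> 'y \<Rightarrow> real) \<Rightarrow> (nat \<rightharpoonup> 'y) \<Rightarrow> real" where
  "Qk_fund q lam n A Fs \<theta> =
     (if \<theta> \<in> Theta n (card A) \<and> card (dom \<theta> \<inter> A) = card A - 1 then
        (let i = the_elem (A - dom \<theta>); i0 = the_elem (dom \<theta> - A) in
         if Fs i \<in> W q lam 0
         then real (card (UNIV :: 'y set)) * tensor A Fs ((\<theta> |` (A - {i}))(i := \<theta> i0))
         else 0)
      else 0)"

definition Qk :: "('y::finite \<Rightarrow> 'y \<Rightarrow> real) \<Rightarrow> (nat \<Rightarrow> real) \<Rightarrow> nat \<Rightarrow> nat \<Rightarrow> nat
    \<Rightarrow> ((nat \<rightharpoonup> 'y) \<Rightarrow> real) \<Rightarrow> (nat \<rightharpoonup> 'y) \<Rightarrow> real" where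
  "Qk q lam m n k F = (SOME G. \<exists>N (cs :: nat \<Rightarrow> real) As Fss idxs.
      (\<forall>t<N. As t \<subseteq> {1..n} \<and> card (As t) = k \<and>
             (\<forall>j\<in>As t. idxs t j \<le> m \<and> Fss t j \<in> W q lam (idxs t j))) \<and>
      F = (\<lambda>\<theta>. \<Sum>t<N. cs t * tensor (As t) (Fss t) \<theta>) \<and>
      G = (\<lambda>\<theta>. \<Sum>t<N. cs t * Qk_fund q lam n (As t) (Fss t) \<theta>))"

end

theory Submission imports Defs begin

lemma W_sum_zero:
  assumes sis: "sym_irred_stochastic q" and ee: "eigen_enum q lam m"
    and i: "i \<le> m" "i \<noteq> 0" and f: "f \<in> W q lam i"
  shows "(\<Sum>y\<in>UNIV. f y) = 0"
proof -
  have inj: "inj_on lam {..m}" and l0: "lam 0 = 1" using ee unfolding eigen_enum_def by blast+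
  have l: "lam i \<noteq> 1"
  proof
    assume "lam i = 1"
    hence "lam i = lam 0" using l0 by simp
    hence "i = 0" using inj_onD[OF inj] i(1) by simp
    thus False using i(2) by simp
  qed
  have "(\<Sum>y\<in>UNIV. Qop q f y) = (\<Sum>y\<in>UNIV. \<Sum>y'\<in>UNIV. q y y' * f y')" by (simp add: Qop_def)
  also have "\<dots> = (\<Sum>y'\<in>UNIV. \<Sum>y\<in>UNIV. q y' y * f y')"
    using sis unfolding sym_irred_stochastic_def by (subst sum.swap) simp
  also have "\<dots> = (\<Sum>y'\<in>UNIV. f y')"
    using sis unfolding sym_irred_stochastic_def by (simp add: sum_distrib_right[symmetric])
  finally have "(\<Sum>y\<in>UNIV. lam i * f y) = (\<Sum>y'\<in>UNIV. f y')" using f by (simp add: W_def)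
  hence "lam i * (\<Sum>y\<in>UNIV. f y) = (\<Sum>y\<in>UNIV. f y)" by (simp add: sum_distrib_left)
  hence "(lam i - 1) * (\<Sum>y\<in>UNIV. f y) = 0" by (simp add: left_diff_distrib)
  thus ?thesis using l by simp
qed

lemma W0_const:
  assumes sis: "sym_irred_stochastic q" and ee: "eigen_enum q lam m"
    and f: "f \<in> W q lam 0"
  shows "f y = f y'"
proof -
  have l0: "lam 0 = 1" using ee unfolding eigen_enum_def by blast
  have Qf: "(\<Sum>w\<in>UNIV. q u w * f w) = f u" for u
  proof -
    have "Qop q f = (\<lambda>y. lam 0 * f y)" using f unfolding W_def by simp
    hence "Qop q f u = lam 0 * f u" by simp
    thus ?thesis using l0 unfolding Qop_def by simp
  qed
  have nn: "\<And>u w. 0 \<le> q u w" and rs: "\<And>u. (\<Sum>w\<in>UNIV. q u w) = 1"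
    and conn: "\<And>u v. (u, v) \<in> {(u, v). q u v > 0}\<^sup>*"
    using sis unfolding sym_irred_stochastic_def by auto
  define M where "M = Max (range f)"
  have le: "\<And>w. f w \<le> M" unfolding M_def by simp
  have "M \<in> range f" unfolding M_def by (rule Max_in) auto
  then obtain ys where ys: "f ys = M" by blast
  have edge: "f v = M" if "f u = M" "q u v > 0" for u v
  proof -
    have "(\<Sum>w\<in>UNIV. q u w * (M - f w)) = (\<Sum>w\<in>UNIV. q u w) * M - (\<Sum>w\<in>UNIV. q u w * f w)"
      by (simp add: right_diff_distrib sum_subtractf sum_distrib_right)
    also have "\<dots> = 0" using rs Qf that by simp
    finally have "(\<Sum>w\<in>UNIV. q u w * (M - f w)) = 0" .
    moreover have "\<forall>w\<in>UNIV. 0 \<le> q u w * (M - f w)" using nn le by simp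
    ultimately have "\<forall>w\<in>UNIV. q u w * (M - f w) = 0"
      using sum_nonneg_eq_0_iff[of UNIV "\<lambda>w. q u w * (M - f w)"] by simp
    hence "q u v * (M - f v) = 0" by simp
    thus ?thesis using that by simp
  qed
  have all: "f z = M" for z
  proof -
    have "(ys, z) \<in> {(u, v). q u v > 0}\<^sup>*" by (rule conn)
    thus ?thesis
    proof (induction rule: rtrancl_induct)
      case base then show ?case by (rule ys)
    next
      case (step v w) then show ?case using edge[of v w] by auto
    qed
  qed
  show ?thesis using all by simp
qed


definition Es :: "((nat \<rightharpoonup> 'y::finite) \<Rightarrow> real) \<Rightarrow> (nat \<rightharpoonup> 'y) \<Rightarrow> real" where
  "Es f \<theta> = (\<Sum>i\<in>dom \<theta>. \<Sum>y\<in>UNIV. f (\<theta>(i \<mapsto> y)))"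

definition Rop :: "nat \<Rightarrow> ((nat \<rightharpoonup> 'y::finite) \<Rightarrow> real) \<Rightarrow> (nat \<rightharpoonup> 'y) \<Rightarrow> real" where
  "Rop n f \<theta> = (\<Sum>i\<in>dom \<theta>. \<Sum>j\<in>{1..n} - dom \<theta>. \<Sum>y\<in>UNIV. f (\<theta>(i := None, j \<mapsto> y)))"

lemma lowerset:
  assumes th: "\<theta> \<in> Theta n k" and k: "1 \<le> k"
  shows "{\<phi>\<in>Theta n (k - 1). \<phi> \<subseteq>\<^sub>m \<theta>} = (\<lambda>i. \<theta>(i := None)) ` dom \<theta>"
    and "inj_on (\<lambda>i. \<theta>(i := None)) (dom \<theta>)"
proof -
  have fin: "finite (dom \<theta>)" and sub: "dom \<theta> \<subseteq> {1..n}" and c: "card (dom \<theta>) = k"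
    using th unfolding Theta_def by (auto intro: finite_subset)
  show "{\<phi>\<in>Theta n (k - 1). \<phi> \<subseteq>\<^sub>m \<theta>} = (\<lambda>i. \<theta>(i := None)) ` dom \<theta>"
  proof (intro equalityI subsetI)
    fix \<phi> assume "\<phi> \<in> {\<phi>\<in>Theta n (k - 1). \<phi> \<subseteq>\<^sub>m \<theta>}"
    hence le: "\<phi> \<subseteq>\<^sub>m \<theta>" and cp: "card (dom \<phi>) = k - 1" unfolding Theta_def by auto
    have ds: "dom \<phi> \<subseteq> dom \<theta>" using le by (rule map_le_implies_dom_le)
    have "card (dom \<theta> - dom \<phi>) = 1" using ds fin c cp k by (simp add: card_Diff_subset finite_subset)
    then obtain i where i: "dom \<theta> - dom \<phi> = {i}" by (rule card_1_singletonE)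
    have "\<phi> = \<theta>(i := None)"
    proof
      fix x show "\<phi> x = (\<theta>(i := None)) x"
      proof (cases "x = i")
        case True thus ?thesis using i by auto
      next
        case False
        show ?thesis
        proof (cases "x \<in> dom \<phi>")
          case True thus ?thesis using le False unfolding map_le_def by auto
        next
          case F2: False
          hence "x \<notin> dom \<theta>" using i False by auto
          thus ?thesis using F2 False by auto
        qed
      qed
    qed
    moreover have "i \<in> dom \<theta>" using i by auto
    ultimately show "\<phi> \<in> (\<lambda>i. \<theta>(i := None)) ` dom \<theta>" by blast
  next
    fix \<phi> assume "\<phi> \<in> (\<lambda>i. \<theta>(i := None)) ` dom \<theta>"
    then obtain i where i: "i \<in> dom \<theta>" and p: "\<phi> = \<theta>(i := None)" by auto
    have "dom \<phi> = dom \<theta> - {i}" using p by auto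
    hence "dom \<phi> \<subseteq> {1..n}" "card (dom \<phi>) = k - 1" using sub c i fin by auto
    moreover have "\<phi> \<subseteq>\<^sub>m \<theta>" using p unfolding map_le_def by auto
    ultimately show "\<phi> \<in> {\<phi>\<in>Theta n (k - 1). \<phi> \<subseteq>\<^sub>m \<theta>}" unfolding Theta_def by auto
  qed
  show "inj_on (\<lambda>i. \<theta>(i := None)) (dom \<theta>)"
  proof (rule inj_onI)
    fix i j assume "i \<in> dom \<theta>" "j \<in> dom \<theta>" "\<theta>(i := None) = \<theta>(j := None)"
    thus "i = j" by (metis domIff fun_upd_apply)
  qed
qed

lemma upperset:
  assumes sub: "dom \<phi> \<subseteq> {1..n}" and c: "card (dom \<phi>) = k - 1" and k: "1 \<le> k"
  shows "{\<theta>\<in>Theta n k. \<phi> \<subseteq>\<^sub>m \<theta>} = (\<lambda>(j, y). \<phi>(j \<mapsto> y)) ` (({1..n} - dom \<phi>) \<times> UNIV)"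
    and "inj_on (\<lambda>(j, y). \<phi>(j \<mapsto> y)) (({1..n} - dom \<phi>) \<times> UNIV)"
proof -
  have fin: "finite (dom \<phi>)" using sub by (auto intro: finite_subset)
  show "{\<theta>\<in>Theta n k. \<phi> \<subseteq>\<^sub>m \<theta>} = (\<lambda>(j, y). \<phi>(j \<mapsto> y)) ` (({1..n} - dom \<phi>) \<times> UNIV)"
  proof (intro equalityI subsetI)
    fix \<theta> assume "\<theta> \<in> {\<theta>\<in>Theta n k. \<phi> \<subseteq>\<^sub>m \<theta>}"
    hence le: "\<phi> \<subseteq>\<^sub>m \<theta>" and ct: "card (dom \<theta>) = k" and st: "dom \<theta> \<subseteq> {1..n}"
      unfolding Theta_def by auto
    have ds: "dom \<phi> \<subseteq> dom \<theta>" using le by (rule map_le_implies_dom_le)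
    have fint: "finite (dom \<theta>)" using st by (auto intro: finite_subset)
    have "card (dom \<theta> - dom \<phi>) = 1" using ds fint ct c k by (simp add: card_Diff_subset finite_subset)
    then obtain j where j: "dom \<theta> - dom \<phi> = {j}" by (rule card_1_singletonE)
    then obtain y where y: "\<theta> j = Some y" by auto
    have "\<theta> = \<phi>(j \<mapsto> y)"
    proof
      fix x show "\<theta> x = (\<phi>(j \<mapsto> y)) x"
      proof (cases "x = j")
        case True thus ?thesis using y by auto
      next
        case False
        show ?thesis
        proof (cases "x \<in> dom \<phi>")
          case True thus ?thesis using le False unfolding map_le_def by auto
        next
          case F2: False
          hence "x \<notin> dom \<theta>" using j False by auto
          thus ?thesis using F2 False by (simp add: domIff)
        qed
      qed
    qed
    moreover have "j \<in> {1..n} - dom \<phi>" using j st by blast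
    ultimately show "\<theta> \<in> (\<lambda>(j, y). \<phi>(j \<mapsto> y)) ` (({1..n} - dom \<phi>) \<times> UNIV)"
      by (intro image_eqI[where x="(j,y)"]) auto
  next
    fix \<theta> assume "\<theta> \<in> (\<lambda>(j, y). \<phi>(j \<mapsto> y)) ` (({1..n} - dom \<phi>) \<times> UNIV)"
    then obtain pr where pr: "pr \<in> ({1..n} - dom \<phi>) \<times> UNIV" "\<theta> = (\<lambda>(j, y). \<phi>(j \<mapsto> y)) pr"
      by blast
    obtain j y where "pr = (j, y)" by (cases pr)
    hence j: "j \<in> {1..n} - dom \<phi>" and p: "\<theta> = \<phi>(j \<mapsto> y)" using pr by auto
    have d: "dom \<theta> = insert j (dom \<phi>)" using p by auto
    hence "dom \<theta> \<subseteq> {1..n}" "card (dom \<theta>) = k" using sub c j fin k by auto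
    moreover have "\<phi> \<subseteq>\<^sub>m \<theta>" using p j unfolding map_le_def by auto
    ultimately show "\<theta> \<in> {\<theta>\<in>Theta n k. \<phi> \<subseteq>\<^sub>m \<theta>}" unfolding Theta_def by auto
  qed
  show "inj_on (\<lambda>(j, y). \<phi>(j \<mapsto> y)) (({1..n} - dom \<phi>) \<times> UNIV)"
  proof (rule inj_onI)
    fix p p' assume pp: "p \<in> ({1..n} - dom \<phi>) \<times> UNIV" "p' \<in> ({1..n} - dom \<phi>) \<times> UNIV"
      "(\<lambda>(j, y). \<phi>(j \<mapsto> y)) p = (\<lambda>(j, y). \<phi>(j \<mapsto> y)) p'"
    obtain j y j' y' where pj: "p = (j, y)" "p' = (j', y')" by (cases p, cases p') 
    have a: "\<phi>(j \<mapsto> y) = \<phi>(j' \<mapsto> y')" "\<phi> j = None" "\<phi> j' = None"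
      using pp pj by auto
    have e: "(\<phi>(j \<mapsto> y)) j = (\<phi>(j' \<mapsto> y')) j" using a(1) by (rule arg_cong)
    have "j = j' \<and> y = y'"
    proof (cases "j = j'")
      case True thus ?thesis using e by simp
    next
      case False
      hence "(\<phi>(j' \<mapsto> y')) j = None" using a(2) by simp
      thus ?thesis using e by simp
    qed
    thus "p = p'" using pj by simp
  qed
qed

lemma DstarD:
  assumes th: "\<theta> \<in> Theta n k" and k: "1 \<le> k"
  shows "Dstar n k (D n k f) \<theta> = Es f \<theta> + Rop n f \<theta>"
proof -
  have fin: "finite (dom \<theta>)" and sub: "dom \<theta> \<subseteq> {1..n}" and c: "card (dom \<theta>) = k"
    using th unfolding Theta_def by (auto intro: finite_subset)
  have "Dstar n k (D n k f) \<theta> = (\<Sum>i\<in>dom \<theta>. D n k f (\<theta>(i := None)))"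
    unfolding Dstar_def lowerset[OF th k] by (rule sum.reindex[OF lowerset(2)[OF th k], unfolded comp_def])
  also have "\<dots> = (\<Sum>i\<in>dom \<theta>. (\<Sum>y\<in>UNIV. f (\<theta>(i \<mapsto> y))) +
       (\<Sum>j\<in>{1..n} - dom \<theta>. \<Sum>y\<in>UNIV. f (\<theta>(i := None, j \<mapsto> y))))"
  proof (rule sum.cong[OF refl])
    fix i assume i: "i \<in> dom \<theta>"
    define \<phi> where "\<phi> = \<theta>(i := None)"
    have dp: "dom \<phi> = dom \<theta> - {i}" unfolding \<phi>_def by auto
    have s1: "dom \<phi> \<subseteq> {1..n}" "card (dom \<phi>) = k - 1" using dp sub c fin i by auto
    have "D n k f \<phi> = (\<Sum>p\<in>({1..n} - dom \<phi>) \<times> UNIV. f ((\<lambda>(j, y). \<phi>(j \<mapsto> y)) p))"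
      unfolding D_def upperset[OF s1 k] sum.reindex[OF upperset(2)[OF s1 k]] comp_def ..
    also have "\<dots> = (\<Sum>j\<in>{1..n} - dom \<phi>. \<Sum>y\<in>UNIV. f (\<phi>(j \<mapsto> y)))"
      unfolding sum.cartesian_product by (simp add: split_def)
    also have "{1..n} - dom \<phi> = insert i ({1..n} - dom \<theta>)" using dp i sub by auto
    also have "(\<Sum>j\<in>insert i ({1..n} - dom \<theta>). \<Sum>y\<in>UNIV. f (\<phi>(j \<mapsto> y))) =
       (\<Sum>y\<in>UNIV. f (\<phi>(i \<mapsto> y))) + (\<Sum>j\<in>{1..n} - dom \<theta>. \<Sum>y\<in>UNIV. f (\<phi>(j \<mapsto> y)))"
      using i by (simp add: sum.insert)
    finally show "D n k f (\<theta>(i := None)) = (\<Sum>y\<in>UNIV. f (\<theta>(i \<mapsto> y))) +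
       (\<Sum>j\<in>{1..n} - dom \<theta>. \<Sum>y\<in>UNIV. f (\<theta>(i := None, j \<mapsto> y)))"
      unfolding \<phi>_def by (simp only: fun_upd_upd)
  qed
  also have "\<dots> = Es f \<theta> + Rop n f \<theta>" unfolding Es_def Rop_def by (simp add: sum.distrib)
  finally show ?thesis .
qed

lemma Es_lin: "Es (\<lambda>x. \<Sum>t<N. c t * g t x) \<theta> = (\<Sum>t<N. c t * Es (g t) \<theta>)"
  unfolding Es_def sum_distrib_left
  by (subst sum.swap, rule sum.cong[OF refl], subst sum.swap, simp)

lemma Rop_lin: "Rop n (\<lambda>x. \<Sum>t<N. c t * g t x) \<theta> = (\<Sum>t<N. c t * Rop n (g t) \<theta>)"
proof -
  have "Rop n (\<lambda>x. \<Sum>t<N. c t * g t x) \<theta> = (\<Sum>i\<in>dom \<theta>. \<Sum>t<N. \<Sum>j\<in>{1..n} - dom \<theta>. \<Sum>y\<in>UNIV. c t * g t (\<theta>(i := None, j \<mapsto> y)))"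
    unfolding Rop_def
    by (rule sum.cong[OF refl], subst sum.swap, rule sum.cong[OF refl], subst sum.swap, rule refl)
  also have "\<dots> = (\<Sum>t<N. \<Sum>i\<in>dom \<theta>. \<Sum>j\<in>{1..n} - dom \<theta>. \<Sum>y\<in>UNIV. c t * g t (\<theta>(i := None, j \<mapsto> y)))"
    by (rule sum.swap)
  also have "\<dots> = (\<Sum>t<N. c t * Rop n (g t) \<theta>)"
    unfolding Rop_def sum_distrib_left ..
  finally show ?thesis .
qed


lemma tensor_upd:
  assumes "dom \<theta> = A" "i \<in> A" "finite A"
  shows "tensor A Fs (\<theta>(i \<mapsto> y)) = Fs i y * (\<Prod>l\<in>A - {i}. Fs l (the (\<theta> l)))"
proof -
  have "dom (\<theta>(i \<mapsto> y)) = A" using assms by auto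
  hence "tensor A Fs (\<theta>(i \<mapsto> y)) = (\<Prod>l\<in>A. Fs l (the ((\<theta>(i \<mapsto> y)) l)))" by (simp add: tensor_def)
  also have "\<dots> = Fs i y * (\<Prod>l\<in>A - {i}. Fs l (the ((\<theta>(i \<mapsto> y)) l)))"
    using assms by (simp add: prod.remove)
  also have "(\<Prod>l\<in>A - {i}. Fs l (the ((\<theta>(i \<mapsto> y)) l))) = (\<Prod>l\<in>A - {i}. Fs l (the (\<theta> l)))"
    by (rule prod.cong) auto
  finally show ?thesis .
qed

lemma tensor_self:
  assumes "dom \<theta> = A" "i \<in> A" "finite A"
  shows "tensor A Fs \<theta> = Fs i (the (\<theta> i)) * (\<Prod>l\<in>A - {i}. Fs l (the (\<theta> l)))"
proof -
  obtain y where "\<theta> i = Some y" using assms by auto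
  hence "\<theta>(i \<mapsto> y) = \<theta>" by auto
  thus ?thesis using tensor_upd[OF assms, of Fs y] \<open>\<theta> i = Some y\<close> by simp
qed

lemma Es_tensor:
  fixes Fs :: "nat \<Rightarrow> 'y::finite \<Rightarrow> real" and \<theta> :: "nat \<rightharpoonup> 'y"
  assumes sis: "sym_irred_stochastic q" and ee: "eigen_enum q lam m"
    and fin: "finite A"
    and H: "\<forall>l\<in>A. idx l \<le> m \<and> Fs l \<in> W q lam (idx l)"
  shows "Es (tensor A Fs) \<theta> = real (card (UNIV :: 'y set)) * real (card {l\<in>A. idx l = 0}) * tensor A Fs \<theta>"
proof (cases "dom \<theta> = A")
  case False
  have "\<And>i y. i \<in> dom \<theta> \<Longrightarrow> tensor A Fs (\<theta>(i \<mapsto> y)) = 0"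
  proof -
    fix i y assume "i \<in> dom \<theta>"
    hence "dom (\<theta>(i \<mapsto> (y::'y))) = dom \<theta>" by auto
    thus "tensor A Fs (\<theta>(i \<mapsto> y)) = 0" using False by (simp add: tensor_def)
  qed
  thus ?thesis using False by (simp add: Es_def tensor_def)
next
  case True
  let ?Y = "real (card (UNIV :: 'y set))"
  have "\<And>i. i \<in> A \<Longrightarrow> (\<Sum>y\<in>UNIV. tensor A Fs (\<theta>(i \<mapsto> y))) = (if idx i = 0 then ?Y * tensor A Fs \<theta> else 0)"
  proof -
    fix i assume i: "i \<in> A"
    let ?P = "\<Prod>l\<in>A - {i}. Fs l (the (\<theta> l))"
    have "(\<Sum>y\<in>UNIV. tensor A Fs (\<theta>(i \<mapsto> y))) = (\<Sum>y\<in>UNIV. Fs i y) * ?P"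
      using tensor_upd[OF True i fin] by (simp add: sum_distrib_right)
    also have "\<dots> = (if idx i = 0 then ?Y * tensor A Fs \<theta> else 0)"
    proof (cases "idx i = 0")
      case True
      hence "Fs i \<in> W q lam 0" using H i by auto
      hence "\<And>y. Fs i y = Fs i (the (\<theta> i))" using W0_const[OF sis ee] by blast
      hence "(\<Sum>y\<in>UNIV. Fs i y) = (\<Sum>y\<in>(UNIV::'y set). Fs i (the (\<theta> i)))" by (rule sum.cong[OF refl])
      hence "(\<Sum>y\<in>UNIV. Fs i y) = ?Y * Fs i (the (\<theta> i))" by simp
      thus ?thesis using True tensor_self[OF \<open>dom \<theta> = A\<close> i fin] by simp
    next
      case False
      hence "(\<Sum>y\<in>UNIV. Fs i y) = 0" using W_sum_zero[OF sis ee] H i by blast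
      thus ?thesis using False by simp
    qed
    finally show "(\<Sum>y\<in>UNIV. tensor A Fs (\<theta>(i \<mapsto> y))) = (if idx i = 0 then ?Y * tensor A Fs \<theta> else 0)" .
  qed
  hence "Es (tensor A Fs) \<theta> = (\<Sum>i\<in>A. if idx i = 0 then ?Y * tensor A Fs \<theta> else 0)"
    unfolding Es_def True by (rule sum.cong[OF refl])
  also have "\<dots> = (\<Sum>i\<in>{l\<in>A. idx l = 0}. ?Y * tensor A Fs \<theta>)"
    by (rule sum.inter_filter[OF fin, symmetric])
  finally show ?thesis by simp
qed


lemma dom_ij: "dom (\<theta>(i := None, j \<mapsto> y)) = insert j (dom \<theta> - {i})"
  by auto

lemma Rop_tensor:
  fixes Fs :: "nat \<Rightarrow> 'y::finite \<Rightarrow> real" and \<theta> :: "nat \<rightharpoonup> 'y"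
  assumes sis: "sym_irred_stochastic q" and ee: "eigen_enum q lam m"
    and As: "A \<subseteq> {1..n}" and cA: "card A = k" and k: "1 \<le> k"
    and th: "\<theta> \<in> Theta n k"
    and H: "\<forall>l\<in>A. idx l \<le> m \<and> Fs l \<in> W q lam (idx l)"
  shows "Rop n (tensor A Fs) \<theta> = Qk_fund q lam n A Fs \<theta>"
proof -
  have finA: "finite A" using As by (auto intro: finite_subset)
  have fin: "finite (dom \<theta>)" and sub: "dom \<theta> \<subseteq> {1..n}" and c: "card (dom \<theta>) = k"
    using th unfolding Theta_def by (auto intro: finite_subset)
  let ?g = "\<lambda>i j. \<Sum>y\<in>UNIV. tensor A Fs (\<theta>(i := None, j \<mapsto> y))"
  have key: "i \<notin> A \<and> j \<in> A \<and> dom \<theta> \<inter> A = dom \<theta> - {i}"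
    if "i \<in> dom \<theta>" "j \<notin> dom \<theta>" "insert j (dom \<theta> - {i}) = A" for i j
    using that by auto
  show ?thesis
  proof (cases "card (dom \<theta> \<inter> A) = card A - 1")
    case C: True
    have "card (A - dom \<theta>) = 1"
      using C cA k finA by (simp add: card_Diff_subset_Int Int_commute)
    then obtain j0 where j0: "A - dom \<theta> = {j0}" by (rule card_1_singletonE)
    have "card (dom \<theta> - A) = 1"
      using C cA k fin c by (simp add: card_Diff_subset_Int)
    then obtain i0 where i0: "dom \<theta> - A = {i0}" by (rule card_1_singletonE)
    have i0d: "i0 \<in> dom \<theta>" "i0 \<notin> A" using i0 by auto
    have j0d: "j0 \<in> {1..n} - dom \<theta>" "j0 \<in> A" using j0 As by auto
    have gz: "?g i j = (if i = i0 then (if j = j0 then ?g i0 j0 else 0) else 0)"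
      if "i \<in> dom \<theta>" "j \<in> {1..n} - dom \<theta>" for i j
    proof (cases "i = i0 \<and> j = j0")
      case True thus ?thesis by simp
    next
      case False
      have "\<And>y. tensor A Fs (\<theta>(i := None, j \<mapsto> y)) = 0"
      proof -
        fix y
        have "insert j (dom \<theta> - {i}) \<noteq> A"
        proof
          assume "insert j (dom \<theta> - {i}) = A"
          hence "i \<notin> A" "j \<in> A" using key that by auto
          hence "i = i0" "j = j0" using i0 j0 that by auto
          thus False using False by simp
        qed
        thus "tensor A Fs (\<theta>(i := None, j \<mapsto> y)) = 0" by (simp add: tensor_def dom_ij)
      qed
      thus ?thesis using False by auto
    qed
    have "Rop n (tensor A Fs) \<theta> = (\<Sum>i\<in>dom \<theta>. \<Sum>j\<in>{1..n} - dom \<theta>.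
        (if i = i0 then (if j = j0 then ?g i0 j0 else 0) else 0))"
      unfolding Rop_def by (intro sum.cong refl gz) auto
    also have "\<dots> = (\<Sum>i\<in>dom \<theta>. if i = i0 then ?g i0 j0 else 0)"
    proof (rule sum.cong[OF refl])
      fix i assume "i \<in> dom \<theta>"
      show "(\<Sum>j\<in>{1..n} - dom \<theta>. (if i = i0 then (if j = j0 then ?g i0 j0 else 0) else 0)) =
         (if i = i0 then ?g i0 j0 else 0)"
        using j0d by (cases "i = i0") (simp_all add: sum.delta)
    qed
    also have "\<dots> = ?g i0 j0" using i0d fin by (simp add: sum.delta)
    finally have R: "Rop n (tensor A Fs) \<theta> = ?g i0 j0" .
    have dA: "insert j0 (dom \<theta> - {i0}) = A" using i0 j0 by auto
    let ?P = "\<Prod>l\<in>A - {j0}. Fs l (the (\<theta> l))"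
    have tg: "tensor A Fs (\<theta>(i0 := None, j0 \<mapsto> y)) = Fs j0 y * ?P" for y
    proof -
      have "tensor A Fs (\<theta>(i0 := None, j0 \<mapsto> y)) = (\<Prod>l\<in>A. Fs l (the ((\<theta>(i0 := None, j0 \<mapsto> y)) l)))"
        using dA by (simp add: tensor_def dom_ij)
      also have "\<dots> = Fs j0 y * (\<Prod>l\<in>A - {j0}. Fs l (the ((\<theta>(i0 := None, j0 \<mapsto> y)) l)))"
        using j0d finA by (simp add: prod.remove)
      also have "(\<Prod>l\<in>A - {j0}. Fs l (the ((\<theta>(i0 := None, j0 \<mapsto> y)) l))) = ?P"
        using i0d by (intro prod.cong refl) auto
      finally show ?thesis .
    qed
    have g0: "?g i0 j0 = (\<Sum>y\<in>UNIV. Fs j0 y) * ?P" by (simp add: tg sum_distrib_right)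
    have te: "the_elem (A - dom \<theta>) = j0" "the_elem (dom \<theta> - A) = i0" using i0 j0 by auto
    have Qf: "Qk_fund q lam n A Fs \<theta> = (if Fs j0 \<in> W q lam 0
         then real (card (UNIV :: 'y set)) * tensor A Fs ((\<theta> |` (A - {j0}))(j0 := \<theta> i0)) else 0)"
    proof -
      have cond: "\<theta> \<in> Theta n (card A) \<and> card (dom \<theta> \<inter> A) = card A - 1" using th cA C by simp
      show ?thesis unfolding Qk_fund_def by (subst if_P[OF cond]) (simp only: Let_def te)
    qed
    show ?thesis
    proof (cases "Fs j0 \<in> W q lam 0")
      case True
      hence "\<And>y. Fs j0 y = Fs j0 (the (\<theta> i0))" using W0_const[OF sis ee] by blast
      hence "(\<Sum>y\<in>UNIV. Fs j0 y) = (\<Sum>y\<in>(UNIV::'y set). Fs j0 (the (\<theta> i0)))" by (rule sum.cong[OF refl])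
      hence s: "(\<Sum>y\<in>UNIV. Fs j0 y) = real (card (UNIV :: 'y set)) * Fs j0 (the (\<theta> i0))" by simp
      define tb where "tb = (\<theta> |` (A - {j0}))(j0 := \<theta> i0)"
      have dtb: "dom tb = A"
      proof -
        have "dom tb = insert j0 (dom (\<theta> |` (A - {j0})))" unfolding tb_def using i0d by auto
        also have "dom (\<theta> |` (A - {j0})) = dom \<theta> \<inter> (A - {j0})" by simp
        also have "insert j0 (dom \<theta> \<inter> (A - {j0})) = A" using j0 by blast
        finally show ?thesis .
      qed
      have "tensor A Fs tb = (\<Prod>l\<in>A. Fs l (the (tb l)))" using dtb by (simp add: tensor_def)
      also have "\<dots> = Fs j0 (the (tb j0)) * (\<Prod>l\<in>A - {j0}. Fs l (the (tb l)))"
        using j0d finA by (simp add: prod.remove)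
      also have "(\<Prod>l\<in>A - {j0}. Fs l (the (tb l))) = ?P"
        unfolding tb_def by (intro prod.cong refl) auto
      finally have "tensor A Fs tb = Fs j0 (the (tb j0)) * ?P" .
      moreover have "tb j0 = \<theta> i0" unfolding tb_def by simp
      ultimately have "tensor A Fs tb = Fs j0 (the (\<theta> i0)) * ?P" by simp
      thus ?thesis using R g0 s Qf[folded tb_def] True by simp
    next
      case False
      have "idx j0 \<noteq> 0" using False H j0d by auto
      hence "(\<Sum>y\<in>UNIV. Fs j0 y) = 0" using W_sum_zero[OF sis ee] H j0d by blast
      thus ?thesis using R g0 Qf False by simp
    qed
  next
    case C: False
    have nc: "\<not> (\<theta> \<in> Theta n (card A) \<and> card (dom \<theta> \<inter> A) = card A - 1)" using C by simp
    have "Qk_fund q lam n A Fs \<theta> = 0" unfolding Qk_fund_def by (subst if_not_P[OF nc]) (rule refl)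
    moreover have "Rop n (tensor A Fs) \<theta> = 0"
      unfolding Rop_def
    proof (intro sum.neutral ballI)
      fix i j y assume ij: "i \<in> dom \<theta>" "j \<in> {1..n} - dom \<theta>"
      have "insert j (dom \<theta> - {i}) \<noteq> A"
      proof
        assume a: "insert j (dom \<theta> - {i}) = A"
        hence "dom \<theta> \<inter> A = dom \<theta> - {i}" using key ij by auto
        hence "card (dom \<theta> \<inter> A) = card A - 1" using fin ij c cA by simp
        thus False using C by simp
      qed
      thus "tensor A Fs (\<theta>(i := None, j \<mapsto> y)) = 0" by (simp add: tensor_def dom_ij)
    qed
    ultimately show ?thesis by simp
  qed
qed

theorem lemma7p4:
  fixes q :: "'y::finite \<Rightarrow> 'y \<Rightarrow> real"
    and lam :: "nat \<Rightarrow> real" and m n k :: nat and a :: "nat \<Rightarrow> nat"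
    and A :: "nat set" and F :: "(nat \<rightharpoonup> 'y) \<Rightarrow> real"
  assumes "sym_irred_stochastic q"
    and "eigen_enum q lam m"
    and "2 \<le> k" and "k \<le> n"
    and "(\<Sum>i\<le>m. a i) = k"
    and "A \<subseteq> {1..n}" and "card A = k"
    and "F \<in> P q lam m a A"
  shows "\<forall>\<theta>\<in>Theta n k.
           Dstar n k (D n k F) \<theta>
             = real (card (UNIV :: 'y set)) * (real k - real (ell m a)) * F \<theta> + Qk q lam m n k F \<theta>"
proof
  fix \<theta> :: "nat \<rightharpoonup> 'y" assume th: "\<theta> \<in> Theta n k"
  note sis = assms(1) and ee = assms(2)
  have k1: "1 \<le> k" using assms(3) by simp
  have finA: "finite A" using assms(6) by (auto intro: finite_subset)
  obtain N :: nat and cs Fss idxs where fd: "\<forall>t<N. fund_data q lam m a A (Fss t) (idxs t)"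
    and Fdef: "F = (\<lambda>\<theta>. \<Sum>t<N. cs t * tensor A (Fss t) \<theta>)"
    using assms(8) unfolding P_def mem_Collect_eq by blast
  have ex: "\<exists>G. \<exists>N (cs :: nat \<Rightarrow> real) As Fss idxs.
      (\<forall>t<N. As t \<subseteq> {1..n} \<and> card (As t) = k \<and>
             (\<forall>j\<in>As t. idxs t j \<le> m \<and> Fss t j \<in> W q lam (idxs t j))) \<and>
      F = (\<lambda>\<theta>. \<Sum>t<N. cs t * tensor (As t) (Fss t) \<theta>) \<and>
      G = (\<lambda>\<theta>. \<Sum>t<N. cs t * Qk_fund q lam n (As t) (Fss t) \<theta>)"
    apply (rule exI[of _ "\<lambda>\<theta>. \<Sum>t<N. cs t * Qk_fund q lam n A (Fss t) \<theta>"])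
    apply (rule exI[of _ N], rule exI[of _ cs], rule exI[of _ "\<lambda>_. A"], rule exI[of _ Fss], rule exI[of _ idxs])
    apply (intro conjI allI impI refl ballI)
    using fd Fdef assms(6,7) unfolding fund_data_def by blast+
  have "\<exists>N (cs :: nat \<Rightarrow> real) As Fss idxs.
      (\<forall>t<N. As t \<subseteq> {1..n} \<and> card (As t) = k \<and>
             (\<forall>j\<in>As t. idxs t j \<le> m \<and> Fss t j \<in> W q lam (idxs t j))) \<and>
      F = (\<lambda>\<theta>. \<Sum>t<N. cs t * tensor (As t) (Fss t) \<theta>) \<and>
      Qk q lam m n k F = (\<lambda>\<theta>. \<Sum>t<N. cs t * Qk_fund q lam n (As t) (Fss t) \<theta>)"
    unfolding Qk_def by (rule someI_ex[OF ex])
  then obtain N' :: nat and cs' As Fss' idxs' where c': "\<forall>t<N'. As t \<subseteq> {1..n} \<and> card (As t) = k \<and>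
             (\<forall>j\<in>As t. idxs' t j \<le> m \<and> Fss' t j \<in> W q lam (idxs' t j))"
    and F': "F = (\<lambda>\<theta>. \<Sum>t<N'. cs' t * tensor (As t) (Fss' t) \<theta>)"
    and G': "Qk q lam m n k F = (\<lambda>\<theta>. \<Sum>t<N'. cs' t * Qk_fund q lam n (As t) (Fss' t) \<theta>)"
    by blast
  have "Qk q lam m n k F \<theta> = (\<Sum>t<N'. cs' t * Rop n (tensor (As t) (Fss' t)) \<theta>)"
    unfolding G'
  proof (rule sum.cong[OF refl])
    fix t assume "t \<in> {..<N'}"
    hence h1: "As t \<subseteq> {1..n}" and h2: "card (As t) = k"
      and h3: "\<forall>j\<in>As t. idxs' t j \<le> m \<and> Fss' t j \<in> W q lam (idxs' t j)"
      using c' by auto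
    show "cs' t * Qk_fund q lam n (As t) (Fss' t) \<theta> = cs' t * Rop n (tensor (As t) (Fss' t)) \<theta>"
      using Rop_tensor[OF sis ee h1 h2 k1 th h3] by simp
  qed
  also have "\<dots> = Rop n F \<theta>" unfolding F' using Rop_lin[where c=cs' and g="\<lambda>t. tensor (As t) (Fss' t)" and N=N' and n=n and \<theta>=\<theta>] by simp
  finally have QR: "Qk q lam m n k F \<theta> = Rop n F \<theta>" .
  have a0: "real k - real (ell m a) = real (a 0)"
  proof -
    have "(\<Sum>i\<le>m. a i) = (\<Sum>i\<in>{0..m}. a i)" by (simp only: atMost_atLeast0)
    also have "\<dots> = a 0 + (\<Sum>i\<in>{Suc 0..m}. a i)" by (rule sum.atLeast_Suc_atMost) simp
    finally have "(\<Sum>i\<le>m. a i) = a 0 + ell m a" unfolding ell_def by simp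
    thus ?thesis using assms(5) by simp
  qed
  have "Es F \<theta> = (\<Sum>t<N. cs t * Es (tensor A (Fss t)) \<theta>)" unfolding Fdef by (rule Es_lin[where c=cs and g="\<lambda>t. tensor A (Fss t)" and N=N and \<theta>=\<theta>])
  also have "\<dots> = (\<Sum>t<N. cs t * (real (card (UNIV :: 'y set)) * real (a 0) * tensor A (Fss t) \<theta>))"
  proof (rule sum.cong[OF refl])
    fix t assume "t \<in> {..<N}"
    hence f: "fund_data q lam m a A (Fss t) (idxs t)" using fd by blast
    hence H: "\<forall>l\<in>A. idxs t l \<le> m \<and> Fss t l \<in> W q lam (idxs t l)"
      and cc: "\<forall>i\<le>m. card {j\<in>A. idxs t j = i} = a i" unfolding fund_data_def by blast+
    have cnt: "card {l\<in>A. idxs t l = 0} = a 0" using cc[rule_format, of 0] by simp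
    show "cs t * Es (tensor A (Fss t)) \<theta> = cs t * (real (card (UNIV :: 'y set)) * real (a 0) * tensor A (Fss t) \<theta>)"
      unfolding Es_tensor[OF sis ee finA H] cnt ..
  qed
  also have "\<dots> = real (card (UNIV :: 'y set)) * real (a 0) * F \<theta>"
    unfolding Fdef sum_distrib_left by (rule sum.cong[OF refl]) (simp only: mult_ac)
  finally have EF: "Es F \<theta> = real (card (UNIV :: 'y set)) * real (a 0) * F \<theta>" .
  show "Dstar n k (D n k F) \<theta>
             = real (card (UNIV :: 'y set)) * (real k - real (ell m a)) * F \<theta> + Qk q lam m n k F \<theta>"
    using DstarD[OF th k1, of F] EF QR a0 by simp
qed

end
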